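(* Let $\Gamma\curvearrowright X, I$ be an almost simple dynamical ideal. Then in the associated permutation model $W[[X]]$, the union of any well-orderable set of well-orderable sets is well-orderable.
   Context: Work in ZFC. $V[[X]]$ is the well-founded model of ZFCA with set of atoms exactly $X$ in which every set of elements is represented by an element; a group action of $\Gamma$ on $X$ extends to $V[[X]]$ by $\gamma\cdot A=\{\gamma\cdot B:B\in A\}$. $\mathrm{stab}(A)=\{\gamma:\gamma\cdot A=A\}$, $\mathrm{pstab}(a)=\{\gamma:\gamma\cdot B=B\ \forall B\in a\}$. A dynamical ideal $\Gamma\curvearrowright X, I$: a group $\Gamma$ acting on $X$ and a $\Gamma$-invariant ideal $I$ on $X$ containing all singletons. Its permutation model $W[[X]]$ is the class of $A\in V[[X]]$ such that $A$ and every element of its transitive closure are symmetric, where $A$ is symmetric if $\mathrm{pstab}(b)\subseteq\mathrm{stab}(A)$ for some $b\in I$. The dynamical ideal is simple if for all $a\subseteq b$ in $I$, the only normal subgroup of $\mathrm{pstab}(a)$ containing $\mathrm{pstab}(b)$ is $\mathrm{pstab}(a)$ itself; it is almost simple if every set in $I$ has a superset $a\in I$ such that for every $b\in I$ with $a\subseteq b$, the only normal subgroup of $\mathrm{pstab}(a)$ containing $\mathrm{pstab}(b)$ is $\mathrm{pstab}(a)$. *)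

theory Defs
  imports "HOL-Algebra.Group_Action"
begin

section \<open>Sets with atoms: a model of V[[X]] (hereditarily of size at most |'k|)\<close>

text \<open>Well-founded trees: a leaf is an atom; a node Node K f denotes the set
  of the denotations of f k for k in K.\<close>

datatype ('a, 'k) tree = Atom 'a | Node "'k set" "'k \<Rightarrow> ('a, 'k) tree"

inductive teq :: "('a, 'k) tree \<Rightarrow> ('a, 'k) tree \<Rightarrow> bool" where
  teq_Atom: "teq (Atom a) (Atom a)"
| teq_Node: "\<lbrakk>\<forall>k\<in>K. \<exists>l\<in>L. teq (f k) (g l); \<forall>l\<in>L. \<exists>k\<in>K. teq (f k) (g l)\<rbrakk>
     \<Longrightarrow> teq (Node K f) (Node L g)"

lemma teq_refl: "teq t t"
proof (induction t)
  case (Atom a) then show ?case by (rule teq_Atom)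
next
  case (Node K f) then show ?case by (auto intro!: teq_Node)
qed

lemma teq_sym: "teq s t \<Longrightarrow> teq t s"
  by (induction rule: teq.induct) (auto intro!: teq.intros)

lemma teq_trans: "teq s t \<Longrightarrow> teq t u \<Longrightarrow> teq s u"
proof (induction arbitrary: u rule: teq.induct)
  case (teq_Atom a) then show ?case by simp
next
  case (teq_Node K L f g)
  from teq_Node.prems obtain M h where u: "u = Node M h"
    and h1: "\<forall>l\<in>L. \<exists>m\<in>M. teq (g l) (h m)" and h2: "\<forall>m\<in>M. \<exists>l\<in>L. teq (g l) (h m)"
    by (cases rule: teq.cases) auto
  show ?case unfolding u
  proof (rule teq.teq_Node)
    show "\<forall>k\<in>K. \<exists>m\<in>M. teq (f k) (h m)"
      using teq_Node.IH(1) h1 by fast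
    show "\<forall>m\<in>M. \<exists>k\<in>K. teq (f k) (h m)"
      using teq_Node.IH(2) h2 by fast
  qed
qed

lemma equivp_teq: "equivp teq"
  by (rule equivpI) (auto simp: reflp_def symp_def transp_def intro: teq_refl teq_sym teq_trans)

quotient_type ('a, 'k) hs = "('a, 'k) tree" / teq
  by (rule equivp_teq)

primrec tmem :: "('a, 'k) tree \<Rightarrow> ('a, 'k) tree \<Rightarrow> bool" where
  "tmem s (Atom a) = False"
| "tmem s (Node K f) = (\<exists>k\<in>K. teq s (f k))"

lemma tmem_resp:
  assumes "teq s s'" "teq t t'" shows "tmem s t = tmem s' t'"
  using assms(2)
proof cases
  case (teq_Atom a) then show ?thesis by simp
next
  case (teq_Node K L f g)
  then show ?thesis using assms(1)
    by simp (meson teq_sym teq_trans)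
qed

lift_definition hs_mem :: "('a, 'k) hs \<Rightarrow> ('a, 'k) hs \<Rightarrow> bool" is tmem
  using tmem_resp by blast

primrec tis_atom :: "('a, 'k) tree \<Rightarrow> bool" where
  "tis_atom (Atom a) = True"
| "tis_atom (Node K f) = False"

lift_definition is_atom :: "('a, 'k) hs \<Rightarrow> bool" is tis_atom
  by (erule teq.cases) auto

primrec tatoms :: "('a, 'k) tree \<Rightarrow> 'a set" where
  "tatoms (Atom a) = {a}"
| "tatoms (Node K f) = (\<Union>k\<in>K. tatoms (f k))"

lemma tatoms_resp: "teq s t \<Longrightarrow> tatoms s = tatoms t"
  by (induction rule: teq.induct) (simp, fastforce)

lift_definition hs_atoms :: "('a, 'k) hs \<Rightarrow> 'a set" is tatoms
  by (rule tatoms_resp)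

primrec tact :: "('a \<Rightarrow> 'a) \<Rightarrow> ('a, 'k) tree \<Rightarrow> ('a, 'k) tree" where
  "tact h (Atom a) = Atom (h a)"
| "tact h (Node K f) = Node K (\<lambda>k. tact h (f k))"

lemma tact_resp: "teq s t \<Longrightarrow> teq (tact h s) (tact h t)"
  by (induction rule: teq.induct) (auto intro!: teq.intros)

lift_definition hs_act :: "('a \<Rightarrow> 'a) \<Rightarrow> ('a, 'k) hs \<Rightarrow> ('a, 'k) hs" is tact
  by (rule tact_resp)

definition elems :: "('a, 'k) hs \<Rightarrow> ('a, 'k) hs set" where
  "elems A = {B. hs_mem B A}"

definition inV :: "'a set \<Rightarrow> ('a, 'k) hs \<Rightarrow> bool" where
  "inV X A \<longleftrightarrow> hs_atoms A \<subseteq> X"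

definition pstab :: "('g, 'b) monoid_scheme \<Rightarrow> ('g \<Rightarrow> 'a \<Rightarrow> 'a) \<Rightarrow> 'a set \<Rightarrow> 'g set" where
  "pstab G \<phi> a = {g \<in> carrier G. \<forall>x\<in>a. \<phi> g x = x}"

definition stab :: "('g, 'b) monoid_scheme \<Rightarrow> ('g \<Rightarrow> 'a \<Rightarrow> 'a) \<Rightarrow> ('a, 'k) hs \<Rightarrow> 'g set" where
  "stab G \<phi> A = {g \<in> carrier G. hs_act (\<phi> g) A = A}"

definition dynamical_ideal ::
  "('g, 'b) monoid_scheme \<Rightarrow> 'a set \<Rightarrow> ('g \<Rightarrow> 'a \<Rightarrow> 'a) \<Rightarrow> 'a set set \<Rightarrow> bool" where
  "dynamical_ideal G X \<phi> I \<longleftrightarrow>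
     group G \<and> group_action G X \<phi> \<and>
     I \<subseteq> Pow X \<and>
     (\<forall>a\<in>I. \<forall>b. b \<subseteq> a \<longrightarrow> b \<in> I) \<and>
     (\<forall>a\<in>I. \<forall>b\<in>I. a \<union> b \<in> I) \<and>
     (\<forall>x\<in>X. {x} \<in> I) \<and>
     (\<forall>g\<in>carrier G. \<forall>a\<in>I. \<phi> g ` a \<in> I)"

definition good_set ::
  "('g, 'b) monoid_scheme \<Rightarrow> ('g \<Rightarrow> 'a \<Rightarrow> 'a) \<Rightarrow> 'a set set \<Rightarrow> 'a set \<Rightarrow> bool" where
  "good_set G \<phi> I a \<longleftrightarrow>
     (\<forall>b\<in>I. a \<subseteq> b \<longrightarrow>
        (\<forall>N. N \<lhd> (G\<lparr>carrier := pstab G \<phi> a\<rparr>) \<and> pstab G \<phi> b \<subseteq> N \<longrightarrow> N = pstab G \<phi> a))"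

definition almost_simple ::
  "('g, 'b) monoid_scheme \<Rightarrow> 'a set \<Rightarrow> ('g \<Rightarrow> 'a \<Rightarrow> 'a) \<Rightarrow> 'a set set \<Rightarrow> bool" where
  "almost_simple G X \<phi> I \<longleftrightarrow> dynamical_ideal G X \<phi> I \<and>
     (\<forall>c\<in>I. \<exists>a\<in>I. c \<subseteq> a \<and> good_set G \<phi> I a)"

definition symmetric ::
  "('g, 'b) monoid_scheme \<Rightarrow> ('g \<Rightarrow> 'a \<Rightarrow> 'a) \<Rightarrow> 'a set set \<Rightarrow> ('a, 'k) hs \<Rightarrow> bool" where
  "symmetric G \<phi> I A \<longleftrightarrow> (\<exists>b\<in>I. pstab G \<phi> b \<subseteq> stab G \<phi> A)"

definition inW ::
  "('g, 'b) monoid_scheme \<Rightarrow> 'a set \<Rightarrow> ('g \<Rightarrow> 'a \<Rightarrow> 'a) \<Rightarrow> 'a set set \<Rightarrow> ('a, 'k) hs \<Rightarrow> bool" where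
  "inW G X \<phi> I A \<longleftrightarrow> inV X A \<and> symmetric G \<phi> I A \<and>
     (\<forall>B. (B, A) \<in> {(x, y). hs_mem x y}\<^sup>+ \<longrightarrow> symmetric G \<phi> I B)"

definition is_kpair :: "('a, 'k) hs \<Rightarrow> ('a, 'k) hs \<Rightarrow> ('a, 'k) hs \<Rightarrow> bool" where
  "is_kpair p u v \<longleftrightarrow> \<not> is_atom p \<and>
     elems p = {z. \<not> is_atom z \<and> (elems z = {u} \<or> elems z = {u, v})}"

definition rel_on :: "('a, 'k) hs \<Rightarrow> ('a, 'k) hs \<Rightarrow> (('a, 'k) hs \<times> ('a, 'k) hs) set" where
  "rel_on R S = {(u, v). u \<in> elems S \<and> v \<in> elems S \<and> (\<exists>p\<in>elems R. is_kpair p u v)}"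

definition wo_in_W ::
  "('g, 'b) monoid_scheme \<Rightarrow> 'a set \<Rightarrow> ('g \<Rightarrow> 'a \<Rightarrow> 'a) \<Rightarrow> 'a set set \<Rightarrow> ('a, 'k) hs \<Rightarrow> bool" where
  "wo_in_W G X \<phi> I S \<longleftrightarrow> \<not> is_atom S \<and>
     (\<exists>R. inW G X \<phi> I R \<and> well_order_on (elems S) (rel_on R S))"

end

theory Submission
  imports Defs
begin


lemma abs_rep[simp]: "abs_hs (rep_hs x) = x"
  by (rule Quotient3_abs_rep[OF Quotient3_hs])

lemma teq_rep_abs: "teq (rep_hs (abs_hs t)) t"
  by (metis abs_rep hs.abs_eq_iff)

lemma hs_cases: obtains a where "x = abs_hs (Atom a)" | K f where "x = abs_hs (Node K f)"
  by (metis abs_rep tree.exhaust)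

lemma elems_Atom[simp]: "elems (abs_hs (Atom a)) = {}"
  unfolding elems_def by (metis (no_types) abs_rep empty_Collect_eq hs_mem.abs_eq tmem.simps(1))

lemma elems_Node: "elems (abs_hs (Node K f)) = (\<lambda>k. abs_hs (f k)) ` K"
proof -
  have "hs_mem z (abs_hs (Node K f)) \<longleftrightarrow> (\<exists>k\<in>K. z = abs_hs (f k))" for z
    using hs_mem.abs_eq[of "rep_hs z" "Node K f"] hs.abs_eq_iff[of "rep_hs z"] by simp
  then show ?thesis unfolding elems_def by auto
qed

lemma is_atom_Atom[simp]: "is_atom (abs_hs (Atom a))" by (simp add: is_atom.abs_eq)
lemma is_atom_Node[simp]: "\<not> is_atom (abs_hs (Node K f))" by (simp add: is_atom.abs_eq)

lemma nonatom_repr: assumes "\<not> is_atom x" obtains K f where "x = abs_hs (Node K f)"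
  using assms by (cases x rule: hs_cases) auto

lemma atom_noelems: "is_atom x \<Longrightarrow> elems x = {}"
  by (cases x rule: hs_cases) auto

lemma hs_ext: assumes "\<not> is_atom x" "\<not> is_atom y" "elems x = elems y" shows "x = y"
proof -
  obtain K f where x: "x = abs_hs (Node K f)" using assms(1) by (rule nonatom_repr)
  obtain L g where y: "y = abs_hs (Node L g)" using assms(2) by (rule nonatom_repr)
  have e: "(\<lambda>k. abs_hs (f k)) ` K = (\<lambda>k. abs_hs (g k)) ` L" using assms(3) x y elems_Node by metis
  have "teq (Node K f) (Node L g)"
  proof (rule teq_Node)
    show "\<forall>k\<in>K. \<exists>l\<in>L. teq (f k) (g l)" using e by (metis (no_types, lifting) hs.abs_eq_iff image_iff)
    show "\<forall>l\<in>L. \<exists>k\<in>K. teq (f k) (g l)" using e by (metis (no_types, lifting) hs.abs_eq_iff image_iff)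
  qed
  then show ?thesis using x y hs.abs_eq_iff by blast
qed

lemma mk_set: "\<exists>x::('a,'k) hs. \<not> is_atom x \<and> elems x = (F :: 'k \<Rightarrow> ('a,'k) hs) ` K"
  by (rule exI[of _ "abs_hs (Node K (\<lambda>k. rep_hs (F k)))"]) (simp add: elems_Node)

lemma elems_repr: "\<exists>K (F :: 'k \<Rightarrow> ('a,'k) hs). elems (x::('a,'k) hs) = F ` K"
proof (cases x rule: hs_cases)
  case (1 a) then show ?thesis by (auto intro: exI[of _ "{}"])
next
  case (2 K f) then show ?thesis by (auto simp: elems_Node)
qed

lemma tact_comp: "tact h (tact h' t) = tact (h \<circ> h') t"
  by (induction t) auto

lemma tact_cong: "(\<forall>a\<in>tatoms t. h a = h' a) \<Longrightarrow> teq (tact h t) (tact h' t)"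
proof (induction t)
  case (Atom a) then show ?case by (simp add: teq_Atom)
next
  case (Node K f) then show ?case by (auto intro!: teq_Node)
qed

lemma tatoms_tact: "tatoms (tact h t) = h ` tatoms t"
  by (induction t) auto

lemma hs_act_comp: "hs_act h (hs_act h' x) = hs_act (h \<circ> h') x"
  by (cases x rule: hs_cases) (simp_all add: hs_act.abs_eq tact_comp del: tact.simps)

lemma hs_act_cong: assumes "\<forall>a\<in>hs_atoms x. h a = h' a" shows "hs_act h x = hs_act h' x"
proof -
  have "teq (tact h (rep_hs x)) (tact h' (rep_hs x))"
    using assms by (intro tact_cong) (metis abs_rep hs_atoms.abs_eq)
  then show ?thesis by (metis abs_rep hs_act.abs_eq hs.abs_eq_iff)
qed

lemma hs_atoms_act: "hs_atoms (hs_act h x) = h ` hs_atoms x"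
  by (metis abs_rep hs_act.abs_eq hs_atoms.abs_eq tatoms_tact)

lemma is_atom_act[simp]: "is_atom (hs_act h x) = is_atom x"
  by (cases x rule: hs_cases) (simp_all add: hs_act.abs_eq)

lemma elems_act: "elems (hs_act h x) = hs_act h ` elems x"
proof (cases x rule: hs_cases)
  case (1 a) then show ?thesis by (simp add: hs_act.abs_eq)
next
  case (2 K f) then show ?thesis by (simp add: hs_act.abs_eq elems_Node image_image)
qed

lemma hs_atoms_elems: "\<not> is_atom x \<Longrightarrow> hs_atoms x = \<Union> (hs_atoms ` elems x)"
  by (erule nonatom_repr) (simp add: elems_Node hs_atoms.abs_eq)

lemma hs_atoms_mem: "y \<in> elems x \<Longrightarrow> hs_atoms y \<subseteq> hs_atoms x"
  by (metis Sup_upper atom_noelems empty_iff hs_atoms_elems image_eqI)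

lemma mem_elems: "hs_mem y x \<longleftrightarrow> y \<in> elems x" by (simp add: elems_def)

lemma fix_up: assumes "\<not> is_atom x" "\<forall>y\<in>elems x. hs_act h y = y" shows "hs_act h x = x"
  using assms by (intro hs_ext) (auto simp: elems_act)



lemma wo_fix:
  assumes wo: "well_order_on S r" and img: "\<sigma> ` S = S" and inj: "inj_on \<sigma> S"
    and pres: "\<And>x y. (x, y) \<in> r \<Longrightarrow> (\<sigma> x, \<sigma> y) \<in> r"
  shows "\<forall>x\<in>S. \<sigma> x = x"
proof (rule ccontr)
  assume "\<not> ?thesis"
  then have ne: "{x\<in>S. \<sigma> x \<noteq> x} \<noteq> {}" by blast
  have wf: "wf (r - Id)" using wo by (simp add: well_order_on_def)
  have lin: "linear_order_on S r" using wo by (simp add: well_order_on_def)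
  then have tot: "total_on S r" and anti: "antisym r"
    by (auto simp: linear_order_on_def partial_order_on_def)
  obtain x where xM: "x \<in> {x\<in>S. \<sigma> x \<noteq> x}" and xmin: "\<And>y. (y, x) \<in> r - Id \<Longrightarrow> y \<notin> {x\<in>S. \<sigma> x \<noteq> x}"
    using wfE_min[OF wf, of _ "{x\<in>S. \<sigma> x \<noteq> x}"] ne by blast
  have xS: "x \<in> S" and sx: "\<sigma> x \<noteq> x" using xM by auto
  have sxS: "\<sigma> x \<in> S" using xS img by blast
  have "(\<sigma> x, x) \<in> r \<or> (x, \<sigma> x) \<in> r" using tot xS sxS sx by (auto simp: total_on_def)
  then show False
  proof
    assume h: "(\<sigma> x, x) \<in> r"
    then have "\<sigma> (\<sigma> x) = \<sigma> x" using xmin[of "\<sigma> x"] sx sxS by auto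
    then show False using inj sxS xS sx by (meson inj_on_eq_iff)
  next
    assume h: "(x, \<sigma> x) \<in> r"
    obtain y where yS: "y \<in> S" and yx: "\<sigma> y = x" using img xS by (metis imageE)
    have yne: "y \<noteq> x" using yx sx by auto
    have "(y, x) \<in> r \<or> (x, y) \<in> r" using tot yS xS yne by (auto simp: total_on_def)
    then show False
    proof
      assume "(y, x) \<in> r"
      then have "\<sigma> y = y" using xmin[of y] yne yS by auto
      then show False using yx yne by simp
    next
      assume "(x, y) \<in> r"
      then have "(\<sigma> x, x) \<in> r" using pres yx by metis
      then show False using anti h sx by (metis antisymD)
    qed
  qed
qed

lemma tact_id: "tact (\<lambda>x. x) t = t"
  by (induction t) auto

lemma hs_act_id: "hs_act (\<lambda>x. x) x = x"
proof -
  have "hs_act (\<lambda>x. x) (abs_hs (rep_hs x)) = abs_hs (tact (\<lambda>x. x) (rep_hs x))" by (rule hs_act.abs_eq)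
  then show ?thesis by (simp only: tact_id abs_rep)
qed

context
  fixes G :: "('g, 'b) monoid_scheme" and X :: "'a set" and \<phi> :: "'g \<Rightarrow> 'a \<Rightarrow> 'a"
  assumes act: "group_action G X \<phi>"
begin

lemma grp: "group G"
  using group_action.group_hom[OF act] unfolding group_hom_def by (rule conjunct1)

lemma act_one: assumes "inV X (x::('a,'k) hs)" shows "hs_act (\<phi> \<one>\<^bsub>G\<^esub>) x = x"
proof -
  have "hs_act (\<phi> \<one>\<^bsub>G\<^esub>) x = hs_act (\<lambda>x. x) x"
    using assms unfolding inV_def
  proof (intro hs_act_cong ballI)
    fix a assume "a \<in> hs_atoms x"
    then have "a \<in> X" using assms unfolding inV_def by blast
    then show "\<phi> \<one>\<^bsub>G\<^esub> a = a" using group_action.id_eq_one[OF act] by (metis restrict_apply')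
  qed
  then show ?thesis by (simp add: hs_act_id)
qed

lemma act_mult: assumes "inV X (x::('a,'k) hs)" "g \<in> carrier G" "h \<in> carrier G"
  shows "hs_act (\<phi> (g \<otimes>\<^bsub>G\<^esub> h)) x = hs_act (\<phi> g) (hs_act (\<phi> h) x)"
  unfolding hs_act_comp using assms unfolding inV_def
  by (intro hs_act_cong) (auto simp: group_action.composition_rule[OF act])

lemma act_inV: assumes "inV X (x::('a,'k) hs)" "g \<in> carrier G" shows "inV X (hs_act (\<phi> g) x)"
  using assms group_action.surj_prop[OF act] unfolding inV_def hs_atoms_act by blast

lemma act_inv1: assumes "inV X (x::('a,'k) hs)" "g \<in> carrier G"
  shows "hs_act (\<phi> (inv\<^bsub>G\<^esub> g)) (hs_act (\<phi> g) x) = x"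
proof -
  have ig: "inv\<^bsub>G\<^esub> g \<in> carrier G" using assms(2) grp by (rule group.inv_closed[rotated])
  have 1: "hs_act (\<phi> (inv\<^bsub>G\<^esub> g)) (hs_act (\<phi> g) x) = hs_act (\<phi> (inv\<^bsub>G\<^esub> g \<otimes>\<^bsub>G\<^esub> g)) x"
    by (rule act_mult[OF assms(1) ig assms(2), symmetric])
  have 2: "inv\<^bsub>G\<^esub> g \<otimes>\<^bsub>G\<^esub> g = \<one>\<^bsub>G\<^esub>" using grp assms(2) by (rule group.l_inv)
  show ?thesis unfolding 1 2 by (rule act_one[OF assms(1)])
qed

lemma act_inv2: assumes "inV X (x::('a,'k) hs)" "g \<in> carrier G"
  shows "hs_act (\<phi> g) (hs_act (\<phi> (inv\<^bsub>G\<^esub> g)) x) = x"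
proof -
  have ig: "inv\<^bsub>G\<^esub> g \<in> carrier G" using assms(2) grp by (rule group.inv_closed[rotated])
  have 1: "hs_act (\<phi> g) (hs_act (\<phi> (inv\<^bsub>G\<^esub> g)) x) = hs_act (\<phi> (g \<otimes>\<^bsub>G\<^esub> inv\<^bsub>G\<^esub> g)) x"
    by (rule act_mult[OF assms(1) assms(2) ig, symmetric])
  have 2: "g \<otimes>\<^bsub>G\<^esub> inv\<^bsub>G\<^esub> g = \<one>\<^bsub>G\<^esub>" using grp assms(2) by (rule group.r_inv)
  show ?thesis unfolding 1 2 by (rule act_one[OF assms(1)])
qed

lemma inV_elem: "inV X x \<Longrightarrow> y \<in> elems x \<Longrightarrow> inV X y"
  unfolding inV_def using hs_atoms_mem by blast

lemma inV_nonatom: "\<not> is_atom x \<Longrightarrow> (\<forall>y\<in>elems x. inV X y) \<Longrightarrow> inV X x"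
  unfolding inV_def using hs_atoms_elems by fastforce

lemma kpair_act:
  fixes p u v :: "('a, 'k) hs"
  assumes k: "is_kpair p u v" and iv: "inV X u" "inV X v" and g: "g \<in> carrier G"
  shows "is_kpair (hs_act (\<phi> g) p) (hs_act (\<phi> g) u) (hs_act (\<phi> g) v)"
proof -
  define s :: "('a,'k) hs \<Rightarrow> ('a,'k) hs" where "s = hs_act (\<phi> g)"
  define t :: "('a,'k) hs \<Rightarrow> ('a,'k) hs" where "t = hs_act (\<phi> (inv\<^bsub>G\<^esub> g))"
  have ep: "elems p = {z. \<not> is_atom z \<and> (elems z = {u} \<or> elems z = {u, v})}"
    and na: "\<not> is_atom p" using k unfolding is_kpair_def by auto
  have tsu: "t (s u) = u" and tsv: "t (s v) = v" unfolding s_def t_def using act_inv1 iv g by blast+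
  have isu: "inV X (s u)" and isv: "inV X (s v)" unfolding s_def using act_inV iv g by blast+
  have "elems (s p) = {z. \<not> is_atom z \<and> (elems z = {s u} \<or> elems z = {s u, s v})}"
  proof (intro equalityI subsetI)
    fix z assume "z \<in> elems (s p)"
    then obtain w where w: "w \<in> elems p" "z = s w" unfolding s_def elems_act by blast
    then have "\<not> is_atom w" "elems w = {u} \<or> elems w = {u, v}" using ep by auto
    then have "\<not> is_atom z" "elems z = {s u} \<or> elems z = {s u, s v}"
      unfolding w(2) s_def elems_act by auto
    then show "z \<in> {z. \<not> is_atom z \<and> (elems z = {s u} \<or> elems z = {s u, s v})}" by blast
  next
    fix z assume "z \<in> {z. \<not> is_atom z \<and> (elems z = {s u} \<or> elems z = {s u, s v})}"
    then have z: "\<not> is_atom z" "elems z = {s u} \<or> elems z = {s u, s v}" by auto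
    have izs: "\<forall>y\<in>elems z. inV X y" using z(2) isu isv by auto
    then have iz: "inV X z" using z(1) inV_nonatom by blast
    have "elems (t z) = t ` elems z" unfolding t_def by (rule elems_act)
    then have "elems (t z) = {u} \<or> elems (t z) = {u, v}" using z(2) tsu tsv by auto
    moreover have "\<not> is_atom (t z)" unfolding t_def using z(1) by simp
    ultimately have "t z \<in> elems p" using ep by blast
    moreover have "z = s (t z)" unfolding s_def t_def using act_inv2[OF iz g] by (rule sym)
    ultimately show "z \<in> elems (s p)" unfolding s_def elems_act by blast
  qed
  moreover have "\<not> is_atom (s p)" unfolding s_def using na by simp
  ultimately show ?thesis unfolding is_kpair_def s_def by blast
qed

lemma fix_elems:
  assumes wo: "well_order_on (elems B) (rel_on R B)" and iB: "inV X B"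
    and g: "g \<in> carrier G" and fR: "hs_act (\<phi> g) R = R" and fB: "hs_act (\<phi> g) B = B"
  shows "\<forall>x\<in>elems B. hs_act (\<phi> g) x = x"
proof (rule wo_fix[OF wo])
  let ?s = "hs_act (\<phi> g)"
  show "?s ` elems B = elems B" using fB elems_act by metis
  show "inj_on ?s (elems B)"
  proof (rule inj_onI)
    fix x y assume "x \<in> elems B" "y \<in> elems B" "?s x = ?s y"
    then show "x = y" using act_inv1[OF inV_elem[OF iB] g] by metis
  qed
  fix x y assume "(x, y) \<in> rel_on R B"
  then obtain p where xy: "x \<in> elems B" "y \<in> elems B" "p \<in> elems R" "is_kpair p x y"
    unfolding rel_on_def by auto
  have "?s x \<in> elems B" "?s y \<in> elems B" using xy fB by (metis elems_act imageI)+
  moreover have "?s p \<in> elems R" using xy fR by (metis elems_act imageI)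
  moreover have "is_kpair (?s p) (?s x) (?s y)"
    using kpair_act xy iB inV_elem g by blast
  ultimately show "(?s x, ?s y) \<in> rel_on R B" unfolding rel_on_def by auto
qed

end


lemma exists_set: "S \<subseteq> range (F :: 'k \<Rightarrow> ('a,'k) hs) \<Longrightarrow> \<exists>x::('a,'k) hs. \<not> is_atom x \<and> elems x = S"
proof -
  assume "S \<subseteq> range F"
  then have "F ` (F -` S) = S" by (simp add: image_vimage_eq Int_absorb2)
  then show ?thesis using mk_set[of F "F -` S"] by simp
qed

lemma pstab_anti: "a \<subseteq> b \<Longrightarrow> pstab G \<phi> b \<subseteq> pstab G \<phi> a"
  unfolding pstab_def by auto

context
  fixes G :: "('g, 'b) monoid_scheme" and X :: "'a set" and \<phi> :: "'g \<Rightarrow> 'a \<Rightarrow> 'a"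
  assumes act: "group_action G X \<phi>"
begin

lemma pstab_subgroup: assumes aX: "a \<subseteq> X" shows "subgroup (pstab G \<phi> a) G"
proof (rule group.subgroupI[OF grp[OF act]])
  show "pstab G \<phi> a \<subseteq> carrier G" unfolding pstab_def by auto
  have "\<phi> \<one>\<^bsub>G\<^esub> x = x" if "x \<in> a" for x
  proof -
    have xX: "x \<in> X" using that aX by blast
    have "\<phi> \<one>\<^bsub>G\<^esub> x = (\<lambda>x\<in>X. x) x" using group_action.id_eq_one[OF act] by simp
    then show ?thesis using xX by simp
  qed
  then have "\<one>\<^bsub>G\<^esub> \<in> pstab G \<phi> a" unfolding pstab_def
    using monoid.one_closed[OF group.is_monoid[OF grp[OF act]]] by blast
  then show "pstab G \<phi> a \<noteq> {}" by blast
next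
  fix g assume g: "g \<in> pstab G \<phi> a"
  then have gc: "g \<in> carrier G" and gf: "\<forall>x\<in>a. \<phi> g x = x" unfolding pstab_def by auto
  have ig: "inv\<^bsub>G\<^esub> g \<in> carrier G" using gc grp[OF act] by (rule group.inv_closed[rotated])
  have "\<phi> (inv\<^bsub>G\<^esub> g) x = x" if "x \<in> a" for x
  proof -
    have xX: "x \<in> X" using that aX by blast
    have "\<phi> (inv\<^bsub>G\<^esub> g) x = \<phi> (inv\<^bsub>G\<^esub> g) (\<phi> g x)" using gf that by simp
    also have "\<dots> = \<phi> (inv\<^bsub>G\<^esub> g \<otimes>\<^bsub>G\<^esub> g) x" using group_action.composition_rule[OF act xX ig gc] by simp
    also have "inv\<^bsub>G\<^esub> g \<otimes>\<^bsub>G\<^esub> g = \<one>\<^bsub>G\<^esub>" using grp[OF act] gc by (rule group.l_inv)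
    also have "\<phi> \<one>\<^bsub>G\<^esub> x = (\<lambda>x\<in>X. x) x" using group_action.id_eq_one[OF act] by simp
    also have "\<dots> = x" using xX by simp
    finally show ?thesis .
  qed
  then show "inv\<^bsub>G\<^esub> g \<in> pstab G \<phi> a" unfolding pstab_def using ig by auto
next
  fix g h assume "g \<in> pstab G \<phi> a" "h \<in> pstab G \<phi> a"
  then have gc: "g \<in> carrier G" "h \<in> carrier G" and gf: "\<forall>x\<in>a. \<phi> g x = x" "\<forall>x\<in>a. \<phi> h x = x"
    unfolding pstab_def by auto
  have "\<phi> (g \<otimes>\<^bsub>G\<^esub> h) x = x" if "x \<in> a" for x
  proof -
    have xX: "x \<in> X" using that aX by blast
    show ?thesis using group_action.composition_rule[OF act xX gc] gf that by simp
  qed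
  moreover have "g \<otimes>\<^bsub>G\<^esub> h \<in> carrier G" using monoid.m_closed[OF group.is_monoid[OF grp[OF act]] gc] .
  ultimately show "g \<otimes>\<^bsub>G\<^esub> h \<in> pstab G \<phi> a" unfolding pstab_def by blast
qed

lemma normal_fixer:
  fixes B :: "('a,'k) hs"
  assumes aX: "a \<subseteq> X" and iB: "inV X B" and fB: "\<forall>g\<in>pstab G \<phi> a. hs_act (\<phi> g) B = B"
  shows "{g \<in> pstab G \<phi> a. \<forall>x\<in>elems B. hs_act (\<phi> g) x = x} \<lhd> G\<lparr>carrier := pstab G \<phi> a\<rparr>"
proof -
  let ?P = "pstab G \<phi> a"
  let ?H = "G\<lparr>carrier := ?P\<rparr>"
  let ?N = "{g \<in> ?P. \<forall>x\<in>elems B. hs_act (\<phi> g) x = x}"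
  have grpG: "group G" by (rule grp[OF act])
  have sub: "subgroup ?P G" using aX by (rule pstab_subgroup)
  have grpH: "group ?H" by (rule subgroup.subgroup_is_group[OF sub grpG])
  have Pc: "?P \<subseteq> carrier G" unfolding pstab_def by auto
  have ix: "inV X x" if "x \<in> elems B" for x using inV_elem[OF act] iB that by blast
  have invH: "inv\<^bsub>?H\<^esub> g = inv\<^bsub>G\<^esub> g" if "g \<in> ?P" for g
    using group.m_inv_consistent[OF grpG sub that] .
  have subN: "subgroup ?N ?H"
  proof (rule group.subgroupI[OF grpH])
    show "?N \<subseteq> carrier ?H" by auto
    have "\<one>\<^bsub>G\<^esub> \<in> ?P" using subgroup.one_closed[OF sub] .
    moreover have "\<forall>x\<in>elems B. hs_act (\<phi> \<one>\<^bsub>G\<^esub>) x = x" using act_one[OF act] ix by blast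
    ultimately show "?N \<noteq> {}" by blast
  next
    fix g assume g: "g \<in> ?N"
    then have gP: "g \<in> ?P" by blast
    have gc: "g \<in> carrier G" using gP Pc by blast
    have "inv\<^bsub>G\<^esub> g \<in> ?P" using subgroup.m_inv_closed[OF sub gP] .
    moreover have "\<forall>x\<in>elems B. hs_act (\<phi> (inv\<^bsub>G\<^esub> g)) x = x"
    proof
      fix x assume x: "x \<in> elems B"
      have "hs_act (\<phi> (inv\<^bsub>G\<^esub> g)) x = hs_act (\<phi> (inv\<^bsub>G\<^esub> g)) (hs_act (\<phi> g) x)" using g x by simp
      also have "\<dots> = x" using act_inv1[OF act ix[OF x] gc] .
      finally show "hs_act (\<phi> (inv\<^bsub>G\<^esub> g)) x = x" .
    qed
    ultimately show "inv\<^bsub>?H\<^esub> g \<in> ?N" using invH[OF gP] by simp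
  next
    fix g h assume g: "g \<in> ?N" and h: "h \<in> ?N"
    have gc: "g \<in> carrier G" "h \<in> carrier G" using g h Pc by auto
    have "g \<otimes>\<^bsub>G\<^esub> h \<in> ?P" using subgroup.m_closed[OF sub] g h by blast
    moreover have "\<forall>x\<in>elems B. hs_act (\<phi> (g \<otimes>\<^bsub>G\<^esub> h)) x = x"
    proof
      fix x assume x: "x \<in> elems B"
      have "hs_act (\<phi> (g \<otimes>\<^bsub>G\<^esub> h)) x = hs_act (\<phi> g) (hs_act (\<phi> h) x)"
        using act_mult[OF act ix[OF x] gc] .
      then show "hs_act (\<phi> (g \<otimes>\<^bsub>G\<^esub> h)) x = x" using g h x by simp
    qed
    ultimately show "g \<otimes>\<^bsub>?H\<^esub> h \<in> ?N" by simp
  qed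
  have conj: "y \<otimes>\<^bsub>?H\<^esub> h \<otimes>\<^bsub>?H\<^esub> inv\<^bsub>?H\<^esub> y \<in> ?N" if y: "y \<in> carrier ?H" and h: "h \<in> ?N" for y h
  proof -
    have yP: "y \<in> ?P" using y by simp
    have yc: "y \<in> carrier G" using yP Pc by blast
    have hc: "h \<in> carrier G" using h Pc by blast
    have iyP: "inv\<^bsub>G\<^esub> y \<in> ?P" using subgroup.m_inv_closed[OF sub yP] .
    have iyc: "inv\<^bsub>G\<^esub> y \<in> carrier G" using iyP Pc by blast
    have "y \<otimes>\<^bsub>G\<^esub> h \<otimes>\<^bsub>G\<^esub> inv\<^bsub>G\<^esub> y \<in> ?P"
      using subgroup.m_closed[OF sub] yP h iyP by blast
    moreover have "hs_act (\<phi> (y \<otimes>\<^bsub>G\<^esub> h \<otimes>\<^bsub>G\<^esub> inv\<^bsub>G\<^esub> y)) x = x" if x: "x \<in> elems B" for x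
    proof -
      have ex: "elems B = hs_act (\<phi> (inv\<^bsub>G\<^esub> y)) ` elems B"
        using fB iyP elems_act by metis
      have x': "hs_act (\<phi> (inv\<^bsub>G\<^esub> y)) x \<in> elems B" using x ex by blast
      have "hs_act (\<phi> (y \<otimes>\<^bsub>G\<^esub> h \<otimes>\<^bsub>G\<^esub> inv\<^bsub>G\<^esub> y)) x
          = hs_act (\<phi> (y \<otimes>\<^bsub>G\<^esub> h)) (hs_act (\<phi> (inv\<^bsub>G\<^esub> y)) x)"
        using act_mult[OF act ix[OF x] monoid.m_closed[OF group.is_monoid[OF grpG] yc hc] iyc] .
      also have "\<dots> = hs_act (\<phi> y) (hs_act (\<phi> h) (hs_act (\<phi> (inv\<^bsub>G\<^esub> y)) x))"
        using act_mult[OF act ix[OF x'] yc hc] .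
      also have "hs_act (\<phi> h) (hs_act (\<phi> (inv\<^bsub>G\<^esub> y)) x) = hs_act (\<phi> (inv\<^bsub>G\<^esub> y)) x"
        using h x' by blast
      also have "hs_act (\<phi> y) (hs_act (\<phi> (inv\<^bsub>G\<^esub> y)) x) = x"
        using act_inv2[OF act ix[OF x] yc] .
      finally show ?thesis .
    qed
    ultimately show ?thesis using invH[OF yP] by simp
  qed
  show ?thesis using group.normal_inv_iff[OF grpH] subN conj by blast
qed

end


definition sg :: "('a,'k) hs \<Rightarrow> ('a,'k) hs" where
  "sg u = (SOME z. \<not> is_atom z \<and> elems z = {u})"
definition pr :: "('a,'k) hs \<Rightarrow> ('a,'k) hs \<Rightarrow> ('a,'k) hs" where
  "pr u v = (SOME z. \<not> is_atom z \<and> elems z = {u, v})"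
definition kp :: "('a,'k) hs \<Rightarrow> ('a,'k) hs \<Rightarrow> ('a,'k) hs" where
  "kp u v = (SOME z. \<not> is_atom z \<and> elems z = {sg u, pr u v})"

lemma two_k: assumes "infinite (UNIV :: 'k set)" obtains k0 k1 :: 'k where "k0 \<noteq> k1"
proof -
  obtain k0 :: 'k where True by blast
  have "infinite (UNIV - {k0})" using assms by simp
  then obtain k1 where "k1 \<in> UNIV - {k0}" by (metis finite.emptyI ex_in_conv)
  then show ?thesis using that by blast
qed

lemma pair_exists: assumes "infinite (UNIV :: 'k set)"
  shows "\<exists>z::('a,'k) hs. \<not> is_atom z \<and> elems z = {u, v}"
proof -
  obtain k0 k1 :: 'k where k: "k0 \<noteq> k1" using two_k[OF assms] by blast
  have "{u, v} \<subseteq> range (\<lambda>k::'k. if k = k0 then u else v)"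
    using k by (auto intro: range_eqI[of _ _ k0] range_eqI[of _ _ k1])
  then show ?thesis by (rule exists_set)
qed

lemma sg_prop: "\<not> is_atom (sg (u::('a,'k) hs)) \<and> elems (sg u) = {u}"
proof -
  have "{u} \<subseteq> range (\<lambda>k::'k. u)" by auto
  then have "\<exists>z::('a,'k) hs. \<not> is_atom z \<and> elems z = {u}" by (rule exists_set)
  then show ?thesis unfolding sg_def by (rule someI_ex)
qed

lemma pr_prop: assumes "infinite (UNIV :: 'k set)"
  shows "\<not> is_atom (pr u v :: ('a,'k) hs) \<and> elems (pr u v) = {u, v}"
  unfolding pr_def by (rule someI_ex) (rule pair_exists[OF assms])

lemma kp_prop: assumes "infinite (UNIV :: 'k set)"
  shows "\<not> is_atom (kp u v :: ('a,'k) hs) \<and> elems (kp u v) = {sg u, pr u v}"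
  unfolding kp_def by (rule someI_ex) (rule pair_exists[OF assms])

lemma kp_is_kpair: assumes "infinite (UNIV :: 'k set)"
  shows "is_kpair (kp u v :: ('a,'k) hs) u v"
proof -
  have "elems (kp u v) = {z. \<not> is_atom z \<and> (elems z = {u} \<or> elems z = {u, v})}"
  proof (intro equalityI subsetI)
    fix z assume "z \<in> elems (kp u v)"
    then have "z = sg u \<or> z = pr u v" using kp_prop[OF assms] by auto
    then show "z \<in> {z. \<not> is_atom z \<and> (elems z = {u} \<or> elems z = {u, v})}"
      using sg_prop pr_prop[OF assms] by auto
  next
    fix z assume "z \<in> {z. \<not> is_atom z \<and> (elems z = {u} \<or> elems z = {u, v})}"
    then have z: "\<not> is_atom z" "elems z = {u} \<or> elems z = {u, v}" by auto
    have "z = sg u \<or> z = pr u v"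
    proof (cases "elems z = {u}")
      case True then show ?thesis using hs_ext[OF z(1), of "sg u"] sg_prop[of u] by simp
    next
      case False then have "elems z = {u, v}" using z(2) by simp
      then show ?thesis using hs_ext[OF z(1), of "pr u v"] pr_prop[OF assms, of u v] by simp
    qed
    then show "z \<in> elems (kp u v)" using kp_prop[OF assms] by auto
  qed
  then show ?thesis unfolding is_kpair_def using kp_prop[OF assms] by blast
qed

lemma kpair_unique: assumes inf: "infinite (UNIV :: 'k set)"
  and k1: "is_kpair (p :: ('a,'k) hs) u v" and k2: "is_kpair p u' v'"
  shows "u = u' \<and> v = v'"
proof -
  have E: "{z::('a,'k) hs. \<not> is_atom z \<and> (elems z = {u} \<or> elems z = {u, v})}
         = {z. \<not> is_atom z \<and> (elems z = {u'} \<or> elems z = {u', v'})}"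
    using k1 k2 unfolding is_kpair_def by blast
  have "sg u \<in> {z::('a,'k) hs. \<not> is_atom z \<and> (elems z = {u} \<or> elems z = {u, v})}"
    using sg_prop[of u] by simp
  then have "sg u \<in> {z::('a,'k) hs. \<not> is_atom z \<and> (elems z = {u'} \<or> elems z = {u', v'})}"
    by (simp only: E)
  then have s1: "{u} = {u'} \<or> {u} = {u', v'}" using sg_prop[of u] by simp
  have "pr u' v' \<in> {z::('a,'k) hs. \<not> is_atom z \<and> (elems z = {u'} \<or> elems z = {u', v'})}"
    using pr_prop[OF inf, of u' v'] by simp
  then have "pr u' v' \<in> {z::('a,'k) hs. \<not> is_atom z \<and> (elems z = {u} \<or> elems z = {u, v})}"
    by (simp only: E)
  then have s2: "{u', v'} = {u} \<or> {u', v'} = {u, v}" using pr_prop[OF inf, of u' v'] by simp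
  have "pr u v \<in> {z::('a,'k) hs. \<not> is_atom z \<and> (elems z = {u} \<or> elems z = {u, v})}"
    using pr_prop[OF inf, of u v] by simp
  then have "pr u v \<in> {z::('a,'k) hs. \<not> is_atom z \<and> (elems z = {u'} \<or> elems z = {u', v'})}"
    by (simp only: E)
  then have s3: "{u, v} = {u'} \<or> {u, v} = {u', v'}" using pr_prop[OF inf, of u v] by simp
  have uu: "u = u'" using s1 by auto
  have "v = v'"
  proof (cases "v = u")
    case True then show ?thesis using s2 uu by (auto simp: doubleton_eq_iff)
  next
    case False then show ?thesis using s3 uu by (auto simp: doubleton_eq_iff)
  qed
  then show ?thesis using uu by simp
qed

lemma sg_fix: "hs_act h u = u \<Longrightarrow> hs_act h (sg u) = sg u"
  by (rule fix_up) (simp_all add: sg_prop)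

lemma pr_fix: "infinite (UNIV :: 'k set) \<Longrightarrow> hs_act h u = u \<Longrightarrow> hs_act h v = v \<Longrightarrow>
  hs_act h (pr u v :: ('a,'k) hs) = pr u v"
  by (rule fix_up) (simp_all add: pr_prop)

lemma kp_fix: "infinite (UNIV :: 'k set) \<Longrightarrow> hs_act h u = u \<Longrightarrow> hs_act h v = v \<Longrightarrow>
  hs_act h (kp u v :: ('a,'k) hs) = kp u v"
  by (rule fix_up) (simp_all add: kp_prop sg_fix pr_fix)

lemma surj_pairs: assumes "infinite (UNIV :: 'k set)" obtains s :: "'k \<Rightarrow> 'k \<times> 'k" where "surj s"
proof -
  have "\<exists>f. bij_betw f (UNIV :: 'k set) ((UNIV :: 'k set) \<times> (UNIV :: 'k set))"
    by (rule card_of_ordIso[THEN iffD2, OF ordIso_symmetric[OF card_of_Times_same_infinite[OF assms]]])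
  then obtain f :: "'k \<Rightarrow> 'k \<times> 'k" where "bij_betw f UNIV ((UNIV :: 'k set) \<times> (UNIV :: 'k set))" by blast
  then have "surj f" by (simp add: bij_betw_def)
  then show ?thesis using that by blast
qed



theorem mainTheorem13:
  fixes G :: "('g, 'b) monoid_scheme" and X :: "'a set" and \<phi> :: "'g \<Rightarrow> 'a \<Rightarrow> 'a"
    and I :: "'a set set" and A U :: "('a, 'k) hs"
  assumes "infinite (UNIV :: 'k set)"
    and "almost_simple G X \<phi> I"
    and "inW G X \<phi> I A"
    and "wo_in_W G X \<phi> I A"
    and "\<forall>B \<in> elems A. wo_in_W G X \<phi> I B"
    and "\<not> is_atom U"
    and "elems U = (\<Union>B \<in> elems A. elems B)"
  shows "wo_in_W G X \<phi> I U"
proof -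
  let ?M = "{(x, y). hs_mem x y} :: (('a,'k) hs \<times> ('a,'k) hs) set"
  note inf = assms(1)
  have dyn: "dynamical_ideal G X \<phi> I" and goodex: "\<forall>c\<in>I. \<exists>a\<in>I. c \<subseteq> a \<and> good_set G \<phi> I a"
    using assms(2) unfolding almost_simple_def by auto
  have act: "group_action G X \<phi>" and IX: "I \<subseteq> Pow X"
    and Iun: "\<forall>a\<in>I. \<forall>b\<in>I. a \<union> b \<in> I" using dyn unfolding dynamical_ideal_def by auto
  have iA: "inV X A" and tcA: "\<forall>B. (B, A) \<in> ?M\<^sup>+ \<longrightarrow> symmetric G \<phi> I B"
    using assms(3) unfolding inW_def by auto
  have memtc: "(x, y) \<in> ?M\<^sup>+" if "x \<in> elems y" for x y :: "('a,'k) hs"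
    using that by (auto simp: mem_elems)
  obtain RA where RA: "inW G X \<phi> I RA" "well_order_on (elems A) (rel_on RA A)"
    using assms(4) unfolding wo_in_W_def by blast
  obtain b0 where b0: "b0 \<in> I" "pstab G \<phi> b0 \<subseteq> stab G \<phi> RA"
    using RA(1) unfolding inW_def symmetric_def by blast
  obtain b1 where b1: "b1 \<in> I" "pstab G \<phi> b1 \<subseteq> stab G \<phi> A"
    using assms(3) unfolding inW_def symmetric_def by blast
  have "b0 \<union> b1 \<in> I" using Iun b0(1) b1(1) by blast
  then obtain a where a: "a \<in> I" "b0 \<union> b1 \<subseteq> a" "good_set G \<phi> I a" using goodex by blast
  let ?P = "pstab G \<phi> a"
  have aX: "a \<subseteq> X" using a(1) IX by blast
  have Pc: "?P \<subseteq> carrier G" by (auto simp: pstab_def)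
  have fixA: "hs_act (\<phi> g) A = A" "hs_act (\<phi> g) RA = RA" if g: "g \<in> ?P" for g
  proof -
    have "g \<in> pstab G \<phi> b0" "g \<in> pstab G \<phi> b1" using g pstab_anti[of b0 a G \<phi>] pstab_anti[of b1 a G \<phi>] a(2) by auto
    then show "hs_act (\<phi> g) A = A" "hs_act (\<phi> g) RA = RA" using b0(2) b1(2) unfolding stab_def by auto
  qed
  have fixB: "\<forall>B\<in>elems A. hs_act (\<phi> g) B = B" if g: "g \<in> ?P" for g
    using fix_elems[OF act RA(2) iA _ fixA(2)[OF g] fixA(1)[OF g]] g Pc by blast
  have key: "\<forall>x\<in>elems B. hs_act (\<phi> g) x = x" if B: "B \<in> elems A" and g: "g \<in> ?P" for B g
  proof -
    obtain RB where RB: "inW G X \<phi> I RB" "well_order_on (elems B) (rel_on RB B)"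
      using assms(5) B unfolding wo_in_W_def by blast
    obtain bR where bR: "bR \<in> I" "pstab G \<phi> bR \<subseteq> stab G \<phi> RB"
      using RB(1) unfolding inW_def symmetric_def by blast
    have "symmetric G \<phi> I B" using tcA memtc[OF B] by blast
    then obtain bB where bB: "bB \<in> I" "pstab G \<phi> bB \<subseteq> stab G \<phi> B"
      unfolding symmetric_def by blast
    define d where "d = a \<union> bR \<union> bB"
    have dI: "d \<in> I" unfolding d_def using Iun a(1) bR(1) bB(1) by blast
    have ad: "a \<subseteq> d" unfolding d_def by blast
    have iB: "inV X B" using inV_elem[OF act iA B] .
    define N where "N = {g \<in> ?P. \<forall>x\<in>elems B. hs_act (\<phi> g) x = x}"
    have Nn: "N \<lhd> G\<lparr>carrier := ?P\<rparr>" unfolding N_def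
      using normal_fixer[OF act aX iB] fixB B by blast
    have sub: "pstab G \<phi> d \<subseteq> N"
    proof
      fix h assume h: "h \<in> pstab G \<phi> d"
      have hP: "h \<in> ?P" using h pstab_anti[OF ad, of G \<phi>] by blast
      have hc: "h \<in> carrier G" using hP Pc by blast
      have "h \<in> pstab G \<phi> bR" "h \<in> pstab G \<phi> bB" using h pstab_anti[of bR d G \<phi>] pstab_anti[of bB d G \<phi>]
        unfolding d_def by auto
      then have "hs_act (\<phi> h) RB = RB" "hs_act (\<phi> h) B = B" using bR(2) bB(2) unfolding stab_def by auto
      then have "\<forall>x\<in>elems B. hs_act (\<phi> h) x = x" using fix_elems[OF act RB(2) iB hc] by blast
      then show "h \<in> N" unfolding N_def using hP by blast
    qed
    have "N = ?P" using a(3) dI ad Nn sub unfolding good_set_def by blast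
    then show ?thesis using g unfolding N_def by blast
  qed
  have Ufix: "\<forall>u\<in>elems U. hs_act (\<phi> g) u = u" if g: "g \<in> ?P" for g
    using key[OF _ g] assms(7) by blast
  have Utc: "(u, A) \<in> ?M\<^sup>+" if u: "u \<in> elems U" for u
  proof -
    obtain B where B: "B \<in> elems A" "u \<in> elems B" using u assms(7) by blast
    show ?thesis using memtc[OF B(2)] memtc[OF B(1)] by (rule trancl_trans)
  qed
  have UinV: "inV X u" if u: "u \<in> elems U" for u
  proof -
    obtain B where B: "B \<in> elems A" "u \<in> elems B" using u assms(7) by blast
    show ?thesis using inV_elem[OF act inV_elem[OF act iA B(1)] B(2)] .
  qed
  obtain r where r: "well_order_on (elems U) r" using well_order_on by blast
  have rdom: "x \<in> elems U \<and> y \<in> elems U" if "(x, y) \<in> r" for x y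
    using well_order_on_domain[OF r that] .
  obtain K and F :: "'k \<Rightarrow> ('a,'k) hs" where KF: "elems U = F ` K" using elems_repr[of U] by (elim exE)
  obtain s :: "'k \<Rightarrow> 'k \<times> 'k" where s: "surj s" by (rule surj_pairs[OF inf])
  define H where "H k = kp (F (fst (s k))) (F (snd (s k)))" for k
  have imgr: "\<exists>u v. (u, v) \<in> r \<and> p = kp u v" if pi: "p \<in> (\<lambda>(u, v). kp u v) ` r" for p
  proof -
    obtain q where q: "q \<in> r" "p = (\<lambda>(u, v). kp u v) q" using pi by blast
    obtain u v where "q = (u, v)" by (cases q)
    then show ?thesis using q by auto
  qed
  have rng: "(\<lambda>(u, v). kp u v) ` r \<subseteq> range H"
  proof
    fix p assume "p \<in> (\<lambda>(u, v). kp u v) ` r"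
    then obtain u v where uv: "(u, v) \<in> r" "p = kp u v" using imgr by blast
    have "u \<in> F ` K" "v \<in> F ` K" using rdom[OF uv(1)] KF by auto
    then obtain k1 k2 where k: "u = F k1" "v = F k2" by blast
    obtain k where kk: "(k1, k2) = s k" using surjD[OF s, of "(k1, k2)"] by (elim exE)
    have "H k = p" unfolding H_def using k uv(2) kk[symmetric] by simp
    then show "p \<in> range H" by (rule range_eqI[OF sym])
  qed
  obtain R :: "('a,'k) hs" where R: "\<not> is_atom R" "elems R = (\<lambda>(u, v). kp u v) ` r"
    using exists_set[OF rng] by (elim exE conjE)
  have relR: "rel_on R U = r"
  proof (intro equalityI subsetI)
    fix x assume x0: "x \<in> rel_on R U"
    obtain u v where x: "x = (u, v)" by (cases x)
    have "(u, v) \<in> {(u, v). u \<in> elems U \<and> v \<in> elems U \<and> (\<exists>p\<in>elems R. is_kpair p u v)}"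
      using x0 unfolding x rel_on_def .
    then have "u \<in> elems U \<and> v \<in> elems U \<and> (\<exists>p\<in>elems R. is_kpair p u v)" by (simp only: mem_Collect_eq case_prod_conv)
    then obtain p where pR: "p \<in> elems R" and pk: "is_kpair p u v" by blast
    have "p \<in> (\<lambda>(u, v). kp u v) ` r" using pR R(2) by simp
    then obtain u' v' where p: "(u', v') \<in> r" "p = kp u' v'" using imgr by blast
    have "u' = u \<and> v' = v" using kpair_unique[OF inf kp_is_kpair[OF inf] pk[unfolded p(2)]] .
    then show "x \<in> r" using p(1) x by simp
  next
    fix x assume xr: "x \<in> r"
    obtain u v where x: "x = (u, v)" by (cases x)
    have "kp u v \<in> (\<lambda>(u, v). kp u v) ` r" using xr x by (auto intro: image_eqI[of _ _ "(u, v)"])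
    then have "kp u v \<in> elems R" using R(2) by simp
    moreover have "u \<in> elems U" "v \<in> elems U" using rdom xr x by auto
    ultimately show "x \<in> rel_on R U" unfolding rel_on_def x using kp_is_kpair[OF inf, of u v] by blast
  qed
  have fixkp: "hs_act (\<phi> g) (kp u v) = kp u v" "hs_act (\<phi> g) (sg u) = sg u" "hs_act (\<phi> g) (pr u v) = pr u v"
    if g: "g \<in> ?P" and uv: "(u, v) \<in> r" for g u v
  proof -
    have "hs_act (\<phi> g) u = u" "hs_act (\<phi> g) v = v" using Ufix[OF g] rdom[OF uv] by auto
    then show "hs_act (\<phi> g) (kp u v) = kp u v" "hs_act (\<phi> g) (sg u) = sg u" "hs_act (\<phi> g) (pr u v) = pr u v"
      by (simp_all add: kp_fix[OF inf] sg_fix pr_fix[OF inf])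
  qed
  have fixR: "hs_act (\<phi> g) R = R" if g: "g \<in> ?P" for g
  proof (rule fix_up[OF R(1)], rule ballI)
    fix y assume "y \<in> elems R"
    then have "y \<in> (\<lambda>(u, v). kp u v) ` r" using R(2) by simp
    then obtain u v where "(u, v) \<in> r" "y = kp u v" using imgr by blast
    then show "hs_act (\<phi> g) y = y" using fixkp(1)[OF g] by simp
  qed
  have symP: "symmetric G \<phi> I Z" if "\<forall>g\<in>?P. hs_act (\<phi> g) Z = Z" for Z :: "('a,'k) hs"
  proof -
    have "?P \<subseteq> stab G \<phi> Z" unfolding stab_def using that Pc by blast
    then show ?thesis unfolding symmetric_def using a(1) by blast
  qed
  have inVkp: "inV X (kp u v)" "inV X (sg u)" "inV X (pr u v)" if uv: "(u, v) \<in> r" for u v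
  proof -
    have iu: "inV X u" "inV X v" using UinV rdom[OF uv] by blast+
    show s1: "inV X (sg u)" by (rule inV_nonatom[OF act]) (use sg_prop[of u] iu in auto)
    show s2: "inV X (pr u v)" by (rule inV_nonatom[OF act]) (use pr_prop[OF inf, of u v] iu in auto)
    show "inV X (kp u v)" by (rule inV_nonatom[OF act]) (use kp_prop[OF inf, of u v] s1 s2 in auto)
  qed
  have iR: "inV X R"
  proof (rule inV_nonatom[OF act R(1)], rule ballI)
    fix y assume "y \<in> elems R"
    then have "y \<in> (\<lambda>(u, v). kp u v) ` r" using R(2) by simp
    then obtain u v where "(u, v) \<in> r" "y = kp u v" using imgr by blast
    then show "inV X y" using inVkp(1) by simp
  qed
  define S where "S = {C. (\<exists>(u, v)\<in>r. C = kp u v \<or> C = sg u \<or> C = pr u v) \<or> (C, A) \<in> ?M\<^sup>+}"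
  have tcR: "C \<in> S" if "(C, R) \<in> ?M\<^sup>+" for C
    using that
  proof (induction rule: converse_trancl_induct)
    case (base y)
    then have "y \<in> elems R" by (simp add: mem_elems)
    then have "y \<in> (\<lambda>(u, v). kp u v) ` r" using R(2) by simp
    then obtain u v where "(u, v) \<in> r" "y = kp u v" using imgr by blast
    then show ?case unfolding S_def by blast
  next
    case (step y z)
    then have yz: "y \<in> elems z" by (simp add: mem_elems)
    from step(3) show ?case unfolding S_def
    proof (elim CollectE disjE bexE)
      fix p assume p: "p \<in> r" and "(case p of (u, v) \<Rightarrow> z = kp u v \<or> z = sg u \<or> z = pr u v)"
      then obtain u v where uv: "(u, v) \<in> r" "z = kp u v \<or> z = sg u \<or> z = pr u v" by (cases p) auto
      have uU: "u \<in> elems U" "v \<in> elems U" using rdom[OF uv(1)] by auto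
      from uv(2) show "y \<in> {C. (\<exists>(u, v)\<in>r. C = kp u v \<or> C = sg u \<or> C = pr u v) \<or> (C, A) \<in> ?M\<^sup>+}"
      proof (elim disjE)
        assume "z = kp u v"
        then have "y = sg u \<or> y = pr u v" using yz kp_prop[OF inf, of u v] by auto
        then show ?thesis using uv(1) by blast
      next
        assume "z = sg u"
        then have "y = u" using yz sg_prop[of u] by auto
        then show ?thesis using Utc uU by blast
      next
        assume "z = pr u v"
        then have "y = u \<or> y = v" using yz pr_prop[OF inf, of u v] by auto
        then show ?thesis using Utc uU by blast
      qed
    next
      assume "(z, A) \<in> ?M\<^sup>+"
      then have "(y, A) \<in> ?M\<^sup>+" using memtc[OF yz] by (rule trancl_trans[rotated])
      then show "y \<in> {C. (\<exists>(u, v)\<in>r. C = kp u v \<or> C = sg u \<or> C = pr u v) \<or> (C, A) \<in> ?M\<^sup>+}" by blast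
    qed
  qed
  have symS: "symmetric G \<phi> I C" if "C \<in> S" for C
  proof -
    from that have "(\<exists>(u, v)\<in>r. C = kp u v \<or> C = sg u \<or> C = pr u v) \<or> (C, A) \<in> ?M\<^sup>+"
      unfolding S_def by blast
    then show ?thesis
    proof
      assume "\<exists>(u, v)\<in>r. C = kp u v \<or> C = sg u \<or> C = pr u v"
      then obtain u v where uv: "(u, v) \<in> r" "C = kp u v \<or> C = sg u \<or> C = pr u v" by blast
      have "\<forall>g\<in>?P. hs_act (\<phi> g) C = C" using fixkp uv by blast
      then show ?thesis by (rule symP)
    qed (use tcA in blast)
  qed
  have WR: "inW G X \<phi> I R"
    unfolding inW_def using iR symP fixR tcR symS by blast
  show ?thesis unfolding wo_in_W_def using assms(6) WR relR r by auto
qed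


end
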